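(* Let $1<w\le 2$ and $1<h\le 2$, let $n\ge 2$ and $\frac12\le y_1<\dots<y_n\le h-\frac12$. In every reasonable layout of this instance, the bottom square is not contained in the bounding box of the other squares.
   Context: The instance is the strip $T=[0,w]\times[0,h]$ with the given $y_i$. A layout is a pair $(\mathbf x,\prec)$ where $\mathbf x=(x_1,\dots,x_n)$ with $x_i\in[\frac12,w-\frac12]$, and $\prec$ is a total order (stacking order) on the squares $s_1,\dots,s_n$, where $s_i$ is the closed axis-parallel unit square with centre $(x_i,y_i)$. If $s_i\prec s_j$ we say $s_j$ is in front of $s_i$ and $s_i$ is behind $s_j$; the bottom square is the $\prec$-minimal square. A point $p$ on the boundary of $s_i$ is visible if every square $s_j$ ($j\neq i$) containing $p$ is behind $s_i$. The visible perimeter of $s_i$ is the total length of its visible boundary points; the gap of $s_i$ is its visible perimeter minus $2$, the gap of a layout is the minimum of the gaps of its squares, and a layout is reasonable if its gap is positive. The bounding box of a collection of squares is the smallest axis-parallel rectangle containing them. *)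

theory Defs
  imports "HOL-Analysis.Analysis"
begin

text \<open>Squares are indexed by 0..<n (paper: 1..n). The stacking order is given by an
injective rank function r on {..<n}: s_i is behind s_j iff r i < r j.\<close>

definition usq :: "real \<Rightarrow> real \<Rightarrow> (real \<times> real) set" where
  "usq a b = cbox (a - 1/2, b - 1/2) (a + 1/2, b + 1/2)"

definition visible_pt ::
  "nat \<Rightarrow> (nat \<Rightarrow> real) \<Rightarrow> (nat \<Rightarrow> real) \<Rightarrow> (nat \<Rightarrow> nat) \<Rightarrow> nat \<Rightarrow> real \<times> real \<Rightarrow> bool" where
  "visible_pt n x y r i p \<longleftrightarrow>
     p \<in> frontier (usq (x i) (y i)) \<and>
     (\<forall>j<n. j \<noteq> i \<and> p \<in> usq (x j) (y j) \<longrightarrow> r j < r i)"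

definition visible_perimeter ::
  "nat \<Rightarrow> (nat \<Rightarrow> real) \<Rightarrow> (nat \<Rightarrow> real) \<Rightarrow> (nat \<Rightarrow> nat) \<Rightarrow> nat \<Rightarrow> real" where
  "visible_perimeter n x y r i =
     measure lborel {t\<in>{0..1}. visible_pt n x y r i (x i - 1/2 + t, y i - 1/2)}
   + measure lborel {t\<in>{0..1}. visible_pt n x y r i (x i - 1/2 + t, y i + 1/2)}
   + measure lborel {t\<in>{0..1}. visible_pt n x y r i (x i - 1/2, y i - 1/2 + t)}
   + measure lborel {t\<in>{0..1}. visible_pt n x y r i (x i + 1/2, y i - 1/2 + t)}"

definition gap_sq ::
  "nat \<Rightarrow> (nat \<Rightarrow> real) \<Rightarrow> (nat \<Rightarrow> real) \<Rightarrow> (nat \<Rightarrow> nat) \<Rightarrow> nat \<Rightarrow> real" where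
  "gap_sq n x y r i = visible_perimeter n x y r i - 2"

definition layout_gap ::
  "nat \<Rightarrow> (nat \<Rightarrow> real) \<Rightarrow> (nat \<Rightarrow> real) \<Rightarrow> (nat \<Rightarrow> nat) \<Rightarrow> real" where
  "layout_gap n x y r = Min ((gap_sq n x y r) ` {..<n})"

definition is_layout ::
  "real \<Rightarrow> nat \<Rightarrow> (nat \<Rightarrow> real) \<Rightarrow> (nat \<Rightarrow> nat) \<Rightarrow> bool" where
  "is_layout w n x r \<longleftrightarrow> (\<forall>i<n. 1/2 \<le> x i \<and> x i \<le> w - 1/2) \<and> inj_on r {..<n}"

definition reasonable ::
  "nat \<Rightarrow> (nat \<Rightarrow> real) \<Rightarrow> (nat \<Rightarrow> real) \<Rightarrow> (nat \<Rightarrow> nat) \<Rightarrow> bool" where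
  "reasonable n x y r \<longleftrightarrow> layout_gap n x y r > 0"

definition bounding_box :: "(real \<times> real) set \<Rightarrow> (real \<times> real) set" where
  "bounding_box S = \<Inter> {cbox a b | a b. S \<subseteq> cbox a b}"

end

theory Submission imports Defs begin

lemma usq_mem: "(p1, p2) \<in> usq a c \<longleftrightarrow> a - 1/2 \<le> p1 \<and> p1 \<le> a + 1/2 \<and> c - 1/2 \<le> p2 \<and> p2 \<le> c + 1/2"
  by (simp add: usq_def cbox_Pair_eq)

lemma meas_sub:
  assumes "A \<subseteq> B" "B \<in> fmeasurable lborel"
  shows "measure lborel A \<le> measure lborel B"
proof (cases "A \<in> sets lborel")
  case True then show ?thesis using measure_mono_fmeasurable assms by blast
next
  case False then show ?thesis using measure_notin_sets[OF False] by simp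
qed

lemma L1:
  fixes V :: "real set"
  assumes "V \<subseteq> {0..1}" "0 \<le> p" "q \<le> 1"
    and "\<And>t. t \<in> V \<Longrightarrow> 0 \<le> t \<Longrightarrow> t \<le> 1 \<Longrightarrow> t < p \<or> q < t"
  shows "measure lborel V \<le> p + (1 - q)"
proof -
  have "V \<subseteq> {0..p} \<union> {q..1}" using assms(1,4) by force
  then have "measure lborel V \<le> measure lborel ({0..p} \<union> {q..1})"
    by (intro meas_sub) (auto intro: fmeasurable_compact)
  also have "\<dots> \<le> measure lborel {0..p} + measure lborel {q..(1::real)}"
    by (rule measure_Un_le) auto
  also have "\<dots> \<le> p + (1 - q)" using assms(2,3) by (cases "q \<le> 1") auto
  finally show ?thesis .
qed

lemma ex_min:
  fixes f :: "nat \<Rightarrow> real"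
  assumes "finite Oth" "Oth \<noteq> {}" "\<forall>j\<in>Oth. c < f j"
  shows "\<exists>m>c. \<forall>j\<in>Oth. m \<le> f j"
  using assms by (intro exI[of _ "Min (f ` Oth)"]) auto

lemma ex_max:
  fixes f :: "nat \<Rightarrow> real"
  assumes "finite Oth" "Oth \<noteq> {}" "\<forall>j\<in>Oth. f j < c"
  shows "\<exists>m<c. \<forall>j\<in>Oth. f j \<le> m"
  using assms by (intro exI[of _ "Max (f ` Oth)"]) auto

theorem proposition3:
  fixes w h :: real and n :: nat and y x :: "nat \<Rightarrow> real" and r :: "nat \<Rightarrow> nat" and b :: nat
  assumes "1 < w" "w \<le> 2" "1 < h" "h \<le> 2" "n \<ge> 2"
    and "\<forall>i<n. 1/2 \<le> y i \<and> y i \<le> h - 1/2"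
    and "\<forall>i j. i < j \<and> j < n \<longrightarrow> y i < y j"
    and "is_layout w n x r"
    and "reasonable n x y r"
    and "b < n" and "\<forall>j<n. j \<noteq> b \<longrightarrow> r b < r j"
  shows "\<not> usq (x b) (y b) \<subseteq> bounding_box (\<Union>j\<in>{..<n} - {b}. usq (x j) (y j))"
proof
  define X where "X = x b"
  define Y where "Y = y b"
  define Oth where "Oth = {..<n} - {b}"
  define U where "U = (\<Union>j\<in>Oth. usq (x j) (y j))"
  assume "usq (x b) (y b) \<subseteq> bounding_box (\<Union>j\<in>{..<n} - {b}. usq (x j) (y j))"
  then have sub: "usq X Y \<subseteq> bounding_box U" unfolding X_def Y_def U_def Oth_def .
  have bb: "usq X Y \<subseteq> cbox a c" if "U \<subseteq> cbox a c" for a c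
    using sub that unfolding bounding_box_def by blast
  have xr: "\<And>j. j < n \<Longrightarrow> 1/2 \<le> x j \<and> x j \<le> w - 1/2" using assms(8) by (simp add: is_layout_def)
  have yr: "\<And>j. j < n \<Longrightarrow> 1/2 \<le> y j \<and> y j \<le> h - 1/2" using assms(6) by simp
  have bX: "1/2 \<le> X \<and> X \<le> w - 1/2" using xr assms(10) X_def by simp
  have bY: "1/2 \<le> Y \<and> Y \<le> h - 1/2" using yr assms(10) Y_def by simp
  have yd: "y j \<noteq> Y" if "j < n" "j \<noteq> b" for j
  proof (cases "j < b")
    case True then show ?thesis using assms(7) assms(10) Y_def by force
  next
    case False then have "b < j" using that by simp
    then show ?thesis using assms(7) that Y_def by force
  qed
  have Othfin: "finite Oth" and Othne: "Oth \<noteq> {}"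
  proof -
    show "finite Oth" by (simp add: Oth_def)
    have "(if b = 0 then 1 else 0) \<in> Oth" using assms(5,10) by (auto simp: Oth_def)
    then show "Oth \<noteq> {}" by blast
  qed
  have Othchar: "j \<in> Oth \<longleftrightarrow> j < n \<and> j \<noteq> b" for j by (auto simp: Oth_def)
  have Usq: "\<And>p1 p2. (p1, p2) \<in> U \<Longrightarrow> \<exists>j. j < n \<and> j \<noteq> b \<and> (p1, p2) \<in> usq (x j) (y j)"
    by (auto simp: U_def Othchar)
  obtain i where i: "i < n" "i \<noteq> b" "y i < Y"
  proof (rule ccontr)
    assume "\<not> thesis"
    have "\<forall>j\<in>Oth. Y < y j"
    proof
      fix q assume "q \<in> Oth" then have q: "q < n" "q \<noteq> b" by (auto simp: Othchar)
      have "\<not> y q < Y" using that[OF q] \<open>\<not> thesis\<close> by blast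
      then show "Y < y q" using yd[OF q] by linarith
    qed
    then obtain m where m: "m > Y" "\<forall>j\<in>Oth. m \<le> y j" using ex_min[OF Othfin Othne] by blast
    have "U \<subseteq> cbox (-10, m - 1/2) (10, 10)"
    proof
      fix p assume "p \<in> U"
      then obtain p1 p2 where p: "p = (p1, p2)" "(p1, p2) \<in> U" by (cases p) auto
      then obtain j where jj: "j < n" "j \<noteq> b" "(p1, p2) \<in> usq (x j) (y j)" using Usq by blast
      then have "j \<in> Oth" by (simp add: Othchar)
      have "x j - 1/2 \<le> p1 \<and> p1 \<le> x j + 1/2 \<and> y j - 1/2 \<le> p2 \<and> p2 \<le> y j + 1/2"
        using jj(3) by (simp add: usq_mem)
      then show "p \<in> cbox (-10, m - 1/2) (10, 10)" unfolding p(1) cbox_Pair_eq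
        using xr[OF jj(1)] yr[OF jj(1)] bspec[OF m(2) \<open>j \<in> Oth\<close>] assms(2,4) by auto
    qed
    then have "(X, Y - 1/2) \<in> cbox (-10, m - 1/2) (10, 10)" by (rule subsetD[OF bb]) (simp add: usq_mem)
    then show False using m by (simp add: cbox_Pair_eq)
  qed
  obtain j where j: "j < n" "j \<noteq> b" "y j > Y"
  proof (rule ccontr)
    assume "\<not> thesis"
    have "\<forall>j\<in>Oth. y j < Y"
    proof
      fix q assume "q \<in> Oth" then have q: "q < n" "q \<noteq> b" by (auto simp: Othchar)
      have "\<not> y q > Y" using that[OF q] \<open>\<not> thesis\<close> by blast
      then show "y q < Y" using yd[OF q] by linarith
    qed
    then obtain m where m: "m < Y" "\<forall>j\<in>Oth. y j \<le> m" using ex_max[OF Othfin Othne] by blast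
    have "U \<subseteq> cbox (-10, -10) (10, m + 1/2)"
    proof
      fix p assume "p \<in> U"
      then obtain p1 p2 where p: "p = (p1, p2)" "(p1, p2) \<in> U" by (cases p) auto
      then obtain j where jj: "j < n" "j \<noteq> b" "(p1, p2) \<in> usq (x j) (y j)" using Usq by blast
      then have "j \<in> Oth" by (simp add: Othchar)
      have "x j - 1/2 \<le> p1 \<and> p1 \<le> x j + 1/2 \<and> y j - 1/2 \<le> p2 \<and> p2 \<le> y j + 1/2"
        using jj(3) by (simp add: usq_mem)
      then show "p \<in> cbox (-10, -10) (10, m + 1/2)" unfolding p(1) cbox_Pair_eq
        using xr[OF jj(1)] yr[OF jj(1)] bspec[OF m(2) \<open>j \<in> Oth\<close>] assms(2,4) by auto
    qed
    then have "(X, Y + 1/2) \<in> cbox (-10, -10) (10, m + 1/2)" by (rule subsetD[OF bb]) (simp add: usq_mem)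
    then show False using m by (simp add: cbox_Pair_eq)
  qed
  obtain k where k: "k < n" "k \<noteq> b" "x k \<le> X"
  proof (rule ccontr)
    assume "\<not> thesis"
    have "\<forall>j\<in>Oth. X < x j"
    proof
      fix q assume "q \<in> Oth" then have q: "q < n" "q \<noteq> b" by (auto simp: Othchar)
      have "\<not> x q \<le> X" using that[OF q] \<open>\<not> thesis\<close> by blast
      then show "X < x q" using yd[OF q] by linarith
    qed
    then obtain m where m: "m > X" "\<forall>j\<in>Oth. m \<le> x j" using ex_min[OF Othfin Othne] by blast
    have "U \<subseteq> cbox (m - 1/2, -10) (10, 10)"
    proof
      fix p assume "p \<in> U"
      then obtain p1 p2 where p: "p = (p1, p2)" "(p1, p2) \<in> U" by (cases p) auto
      then obtain j where jj: "j < n" "j \<noteq> b" "(p1, p2) \<in> usq (x j) (y j)" using Usq by blast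
      then have "j \<in> Oth" by (simp add: Othchar)
      have "x j - 1/2 \<le> p1 \<and> p1 \<le> x j + 1/2 \<and> y j - 1/2 \<le> p2 \<and> p2 \<le> y j + 1/2"
        using jj(3) by (simp add: usq_mem)
      then show "p \<in> cbox (m - 1/2, -10) (10, 10)" unfolding p(1) cbox_Pair_eq
        using xr[OF jj(1)] yr[OF jj(1)] bspec[OF m(2) \<open>j \<in> Oth\<close>] assms(2,4) by auto
    qed
    then have "(X - 1/2, Y) \<in> cbox (m - 1/2, -10) (10, 10)" by (rule subsetD[OF bb]) (simp add: usq_mem)
    then show False using m by (simp add: cbox_Pair_eq)
  qed
  obtain l where l: "l < n" "l \<noteq> b" "x l \<ge> X"
  proof (rule ccontr)
    assume "\<not> thesis"
    have "\<forall>j\<in>Oth. x j < X"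
    proof
      fix q assume "q \<in> Oth" then have q: "q < n" "q \<noteq> b" by (auto simp: Othchar)
      have "\<not> x q \<ge> X" using that[OF q] \<open>\<not> thesis\<close> by blast
      then show "x q < X" using yd[OF q] by linarith
    qed
    then obtain m where m: "m < X" "\<forall>j\<in>Oth. x j \<le> m" using ex_max[OF Othfin Othne] by blast
    have "U \<subseteq> cbox (-10, -10) (m + 1/2, 10)"
    proof
      fix p assume "p \<in> U"
      then obtain p1 p2 where p: "p = (p1, p2)" "(p1, p2) \<in> U" by (cases p) auto
      then obtain j where jj: "j < n" "j \<noteq> b" "(p1, p2) \<in> usq (x j) (y j)" using Usq by blast
      then have "j \<in> Oth" by (simp add: Othchar)
      have "x j - 1/2 \<le> p1 \<and> p1 \<le> x j + 1/2 \<and> y j - 1/2 \<le> p2 \<and> p2 \<le> y j + 1/2"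
        using jj(3) by (simp add: usq_mem)
      then show "p \<in> cbox (-10, -10) (m + 1/2, 10)" unfolding p(1) cbox_Pair_eq
        using xr[OF jj(1)] yr[OF jj(1)] bspec[OF m(2) \<open>j \<in> Oth\<close>] assms(2,4) by auto
    qed
    then have "(X + 1/2, Y) \<in> cbox (-10, -10) (m + 1/2, 10)" by (rule subsetD[OF bb]) (simp add: usq_mem)
    then show False using m by (simp add: cbox_Pair_eq)
  qed
  have notin: "p \<notin> usq (x j) (y j)" if "j < n" "j \<noteq> b" "visible_pt n x y r b p" for j p
    using that assms(11) unfolding visible_pt_def by force
  define VB where "VB = {t\<in>{0..1}. visible_pt n x y r b (X - 1/2 + t, Y - 1/2)}"
  define VT where "VT = {t\<in>{0..1}. visible_pt n x y r b (X - 1/2 + t, Y + 1/2)}"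
  define VL where "VL = {t\<in>{0..1}. visible_pt n x y r b (X - 1/2, Y - 1/2 + t)}"
  define VR where "VR = {t\<in>{0..1}. visible_pt n x y r b (X + 1/2, Y - 1/2 + t)}"
  have sB: "VB \<subseteq> {0..1}" and sT: "VT \<subseteq> {0..1}" and sL: "VL \<subseteq> {0..1}" and sR: "VR \<subseteq> {0..1}"
    by (auto simp: VB_def VT_def VL_def VR_def)
  have eB: "t < x q - X \<or> t > x q - X + 1" if "q < n" "q \<noteq> b" "y q \<le> Y" "t \<in> VB" for q t
    using notin[OF that(1,2), of "(X - 1/2 + t, Y - 1/2)"] that yr[of q] bY assms(4)
    by (auto simp: VB_def usq_mem)
  have eT: "t < x q - X \<or> t > x q - X + 1" if "q < n" "q \<noteq> b" "y q \<ge> Y" "t \<in> VT" for q t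
    using notin[OF that(1,2), of "(X - 1/2 + t, Y + 1/2)"] that yr[of q] bY assms(4)
    by (auto simp: VT_def usq_mem)
  have eL: "t < y q - Y \<or> t > y q - Y + 1" if "q < n" "q \<noteq> b" "x q \<le> X" "t \<in> VL" for q t
    using notin[OF that(1,2), of "(X - 1/2, Y - 1/2 + t)"] that xr[of q] bX assms(2)
    by (auto simp: VL_def usq_mem)
  have eR: "t < y q - Y \<or> t > y q - Y + 1" if "q < n" "q \<noteq> b" "x q \<ge> X" "t \<in> VR" for q t
    using notin[OF that(1,2), of "(X + 1/2, Y - 1/2 + t)"] that xr[of q] bX assms(2)
    by (auto simp: VR_def usq_mem)
  have VP: "visible_perimeter n x y r b = measure lborel VB + measure lborel VT + measure lborel VL + measure lborel VR"
    by (simp add: visible_perimeter_def VB_def VT_def VL_def VR_def X_def Y_def)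
  note rng = xr[OF i(1)] xr[OF j(1)] xr[OF k(1)] xr[OF l(1)] yr[OF i(1)] yr[OF j(1)] yr[OF k(1)] yr[OF l(1)]
    bX bY assms(1-4)
  have le2: "visible_perimeter n x y r b \<le> 2"
  proof (cases "x i \<ge> X")
    case ci: True
    show ?thesis
    proof (cases "x j \<ge> X")
      case cj: True
      have mR: "measure lborel VR \<le> 0 + (1 - 1)"
        apply (rule L1[OF sR])
          using i j rng apply linarith
          using i j rng apply linarith
          subgoal for t using eR[OF i(1,2) ci, of t] eR[OF j(1,2) cj, of t] i j rng by auto
          done
      show ?thesis
      proof (cases "y k \<le> Y")
        case ck: True
        have mL: "measure lborel VL \<le> 0 + (1 - (1 + (y k - Y)))"
          apply (rule L1[OF sL])
            using k ck rng apply linarith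
            using k ck rng apply linarith
            subgoal for t using eL[OF k(1,2,3), of t] k ck rng by auto
            done
        have mB: "measure lborel VB \<le> 0 + (1 - 1)"
          apply (rule L1[OF sB])
            using i k ci rng apply linarith
            using i k ci rng apply linarith
            subgoal for t using eB[OF i(1,2), of t] eB[OF k(1,2) ck, of t] i k ci rng by auto
            done
        have mT: "measure lborel VT \<le> (x j - X) + (1 - 1)"
          apply (rule L1[OF sT])
            using j k cj rng apply linarith
            using j k cj rng apply linarith
            subgoal for t using eT[OF j(1,2), of t] j k cj rng by auto
            done
        show ?thesis using VP mR mL mB mT k rng by linarith
      next
        case ck: False
        have mL: "measure lborel VL \<le> (y k - Y) + (1 - 1)"
          apply (rule L1[OF sL])
            using k ck rng apply linarith
            using k ck rng apply linarith
            subgoal for t using eL[OF k(1,2,3), of t] k ck rng by auto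
            done
        have mT: "measure lborel VT \<le> 0 + (1 - 1)"
          apply (rule L1[OF sT])
            using j k cj ck rng apply linarith
            using j k cj ck rng apply linarith
            subgoal for t using eT[OF j(1,2), of t] eT[OF k(1,2), of t] j k cj ck rng by auto
            done
        have mB: "measure lborel VB \<le> (x i - X) + (1 - 1)"
          apply (rule L1[OF sB])
            using i ci rng apply linarith
            using i ci rng apply linarith
            subgoal for t using eB[OF i(1,2), of t] i ci rng by auto
            done
        show ?thesis using VP mR mL mB mT k rng by linarith
      qed
    next
      case cj: False
      have mB: "measure lborel VB \<le> (x i - X) + (1 - 1)"
        apply (rule L1[OF sB])
          using i ci rng apply linarith
          using i ci rng apply linarith
          subgoal for t using eB[OF i(1,2), of t] i ci rng by auto
          done
      have mR: "measure lborel VR \<le> 0 + (1 - (1 + (y i - Y)))"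
        apply (rule L1[OF sR])
          using i rng apply linarith
          using i rng apply linarith
          subgoal for t using eR[OF i(1,2) ci, of t] i rng by auto
          done
      have mT: "measure lborel VT \<le> 0 + (1 - (1 + (x j - X)))"
        apply (rule L1[OF sT])
          using j cj rng apply linarith
          using j cj rng apply linarith
          subgoal for t using eT[OF j(1,2), of t] j cj rng by auto
          done
      have mL: "measure lborel VL \<le> (y j - Y) + (1 - 1)"
        apply (rule L1[OF sL])
          using j cj rng apply linarith
          using j cj rng apply linarith
          subgoal for t using eL[OF j(1,2), of t] j cj rng by auto
          done
      show ?thesis using VP mR mL mB mT rng by linarith
    qed
  next
    case ci: False
    show ?thesis
    proof (cases "x j \<ge> X")
      case cj: True
      have mB: "measure lborel VB \<le> 0 + (1 - (1 + (x i - X)))"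
        apply (rule L1[OF sB])
          using i ci rng apply linarith
          using i ci rng apply linarith
          subgoal for t using eB[OF i(1,2), of t] i ci rng by auto
          done
      have mL: "measure lborel VL \<le> 0 + (1 - (1 + (y i - Y)))"
        apply (rule L1[OF sL])
          using i ci rng apply linarith
          using i ci rng apply linarith
          subgoal for t using eL[OF i(1,2), of t] i ci rng by auto
          done
      have mT: "measure lborel VT \<le> (x j - X) + (1 - 1)"
        apply (rule L1[OF sT])
          using j cj rng apply linarith
          using j cj rng apply linarith
          subgoal for t using eT[OF j(1,2), of t] j cj rng by auto
          done
      have mR: "measure lborel VR \<le> (y j - Y) + (1 - 1)"
        apply (rule L1[OF sR])
          using j rng apply linarith
          using j rng apply linarith
          subgoal for t using eR[OF j(1,2) cj, of t] j rng by auto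
          done
      show ?thesis using VP mR mL mB mT rng by linarith
    next
      case cj: False
      have mL: "measure lborel VL \<le> 0 + (1 - 1)"
        apply (rule L1[OF sL])
          using i j ci cj rng apply linarith
          using i j ci cj rng apply linarith
          subgoal for t using eL[OF i(1,2), of t] eL[OF j(1,2), of t] i j ci cj rng by auto
          done
      show ?thesis
      proof (cases "y l \<le> Y")
        case cl: True
        have mR: "measure lborel VR \<le> 0 + (1 - (1 + (y l - Y)))"
          apply (rule L1[OF sR])
            using l cl rng apply linarith
            using l cl rng apply linarith
            subgoal for t using eR[OF l(1,2,3), of t] l cl rng by auto
            done
        have mB: "measure lborel VB \<le> 0 + (1 - 1)"
          apply (rule L1[OF sB])
            using i l ci rng apply linarith
            using i l ci rng apply linarith
            subgoal for t using eB[OF i(1,2), of t] eB[OF l(1,2) cl, of t] i l ci rng by auto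
            done
        have mT: "measure lborel VT \<le> 0 + (1 - (1 + (x j - X)))"
          apply (rule L1[OF sT])
            using j l cj rng apply linarith
            using j l cj rng apply linarith
            subgoal for t using eT[OF j(1,2), of t] j l cj rng by auto
            done
        show ?thesis using VP mR mL mB mT l rng by linarith
      next
        case cl: False
        have mR: "measure lborel VR \<le> (y l - Y) + (1 - 1)"
          apply (rule L1[OF sR])
            using l cl rng apply linarith
            using l cl rng apply linarith
            subgoal for t using eR[OF l(1,2,3), of t] l cl rng by auto
            done
        have mT: "measure lborel VT \<le> 0 + (1 - 1)"
          apply (rule L1[OF sT])
            using j l cj cl rng apply linarith
            using j l cj cl rng apply linarith
            subgoal for t using eT[OF j(1,2), of t] eT[OF l(1,2), of t] j l cj cl rng by auto
            done
        have mB: "measure lborel VB \<le> 0 + (1 - (1 + (x i - X)))"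
          apply (rule L1[OF sB])
            using i ci rng apply linarith
            using i ci rng apply linarith
            subgoal for t using eB[OF i(1,2), of t] i ci rng by auto
            done
        show ?thesis using VP mR mL mB mT l rng by linarith
      qed
    qed
  qed
  have "layout_gap n x y r \<le> gap_sq n x y r b"
    unfolding layout_gap_def using assms(10) by (intro Min_le) auto
  then show False using assms(9) le2 by (simp add: reasonable_def gap_sq_def)
qed

end
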